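(* Let $G=(V,E)$ be a graph with a string representation $\varphi$ in the plane, let $D\subseteq V$, and let $R\subseteq\mathbb{R}^2$ be a region. If $\pi$ is a shortest curve relative to $D$ and $\pi'\subseteq R$ is a sub-curve of $\pi$, then $\pi'$ is a shortest curve relative to $D\cap V|_R$ in $G|_R$ with representation $\varphi|_R$.
   Context: A string representation assigns to each vertex $v$ a bounded curve $\varphi(v)\subseteq\mathbb{R}^2$ with distinct $u,v$ adjacent iff the curves intersect; representations are assumed to have finitely many intersection points, no touching, no triple points, no self-intersections. Faces of the representation are the arc-connected components of the complement of all strings; a region is the closure of a union of some faces. For a closed region $R$, $G|_R=(V|_R,E|_R)$ is the intersection graph of the arc-connected components of the sets $\varphi(v)\cap R$ (each such component is a new vertex, a split of $v$), with representation $\varphi|_R$ given by these components. A path $P$ is a shortest path relative to $D$ if it is shortest in $G[P\cup D]$. For such $P$ from $u$ to $v$ and points $A\in\varphi(u)$, $B\in\varphi(v)$, a curve $\pi\subseteq\bigcup_{p\in P}\varphi(p)$ from $A$ to $B$ whose intersection with each $\varphi(p)$ is connected, these intersections occurring along $\pi$ in the order of $P$, is a shortest curve of $P$ relative to $D$; a shortest curve relative to $D$ is one for some shortest path relative to $D$. *)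

theory Defs
  imports "HOL-Analysis.Analysis"
begin

type_synonym point = "real^2"

definition adj :: "('v \<Rightarrow> point set) \<Rightarrow> 'v \<Rightarrow> 'v \<Rightarrow> bool" where
  "adj \<phi> u v \<longleftrightarrow> u \<noteq> v \<and> \<phi> u \<inter> \<phi> v \<noteq> {}"

text \<open>Two strings cross at p (no touching): locally homeomorphic to two
  perpendicular diameters of a disc.\<close>
definition crosses_at :: "point set \<Rightarrow> point set \<Rightarrow> point \<Rightarrow> bool" where
  "crosses_at A B p \<longleftrightarrow>
     (\<exists>(U::point set) (f::point \<Rightarrow> point) f'. open U \<and> p \<in> U \<and> homeomorphism U (ball 0 1) f f' \<and> f p = 0 \<and>
        f ` (A \<inter> U) = {x \<in> ball 0 1. x $ 2 = 0} \<and>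
        f ` (B \<inter> U) = {x \<in> ball 0 1. x $ 1 = 0})"

definition string_rep :: "'v set \<Rightarrow> ('v \<Rightarrow> point set) \<Rightarrow> bool" where
  "string_rep V \<phi> \<longleftrightarrow>
     finite V \<and>
     (\<forall>v\<in>V. \<exists>g. arc g \<and> \<phi> v = path_image g) \<and>
     finite (\<Union>{\<phi> u \<inter> \<phi> v | u v. u \<in> V \<and> v \<in> V \<and> u \<noteq> v}) \<and>
     (\<forall>u\<in>V. \<forall>v\<in>V. \<forall>w\<in>V. u \<noteq> v \<and> v \<noteq> w \<and> u \<noteq> w \<longrightarrow> \<phi> u \<inter> \<phi> v \<inter> \<phi> w = {}) \<and>
     (\<forall>u\<in>V. \<forall>v\<in>V. \<forall>p. u \<noteq> v \<and> p \<in> \<phi> u \<inter> \<phi> v \<longrightarrow> crosses_at (\<phi> u) (\<phi> v) p)"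

definition faces :: "'v set \<Rightarrow> ('v \<Rightarrow> point set) \<Rightarrow> point set set" where
  "faces V \<phi> = {path_component_set (- \<Union>(\<phi> ` V)) x | x. x \<notin> \<Union>(\<phi> ` V)}"

definition region :: "'v set \<Rightarrow> ('v \<Rightarrow> point set) \<Rightarrow> point set \<Rightarrow> bool" where
  "region V \<phi> R \<longleftrightarrow> (\<exists>F. F \<subseteq> faces V \<phi> \<and> R = closure (\<Union>F))"

text \<open>Restriction G|_R: vertices are splits (v, C), C an arc-connected component
  of \<phi> v \<inter> R; the representation \<phi>|_R is snd.\<close>
definition restr_V :: "'v set \<Rightarrow> ('v \<Rightarrow> point set) \<Rightarrow> point set \<Rightarrow> ('v \<times> point set) set" where
  "restr_V V \<phi> R = {(v, path_component_set (\<phi> v \<inter> R) x) | v x. v \<in> V \<and> x \<in> \<phi> v \<inter> R}"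

definition restr_rep :: "('v \<times> point set) \<Rightarrow> point set" where
  "restr_rep s = snd s"

definition restr_D :: "'v set \<Rightarrow> ('v \<Rightarrow> point set) \<Rightarrow> point set \<Rightarrow> 'v set \<Rightarrow> ('v \<times> point set) set" where
  "restr_D V \<phi> R D = {s \<in> restr_V V \<phi> R. fst s \<in> D}"

definition walk_in :: "'v set \<Rightarrow> ('v \<Rightarrow> 'v \<Rightarrow> bool) \<Rightarrow> 'v list \<Rightarrow> bool" where
  "walk_in S E P \<longleftrightarrow> P \<noteq> [] \<and> set P \<subseteq> S \<and> (\<forall>i. Suc i < length P \<longrightarrow> E (P ! i) (P ! Suc i))"

definition shortest_path_rel :: "'v set \<Rightarrow> ('v \<Rightarrow> point set) \<Rightarrow> 'v set \<Rightarrow> 'v list \<Rightarrow> bool" where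
  "shortest_path_rel V \<phi> D P \<longleftrightarrow>
     walk_in V (adj \<phi>) P \<and>
     (\<forall>Q. walk_in (set P \<union> (D \<inter> V)) (adj \<phi>) Q \<and> hd Q = hd P \<and> last Q = last P
          \<longrightarrow> length P \<le> length Q)"

definition shortest_curve_of :: "'v set \<Rightarrow> ('v \<Rightarrow> point set) \<Rightarrow> 'v set \<Rightarrow> 'v list \<Rightarrow> (real \<Rightarrow> point) \<Rightarrow> bool" where
  "shortest_curve_of V \<phi> D P g \<longleftrightarrow>
     shortest_path_rel V \<phi> D P \<and> path g \<and>
     pathstart g \<in> \<phi> (hd P) \<and> pathfinish g \<in> \<phi> (last P) \<and>
     path_image g \<subseteq> \<Union>(\<phi> ` set P) \<and>
     (\<forall>p\<in>set P. path_image g \<inter> \<phi> p \<noteq> {} \<and> connected (path_image g \<inter> \<phi> p)) \<and>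
     (\<forall>i j s t. i < j \<and> j < length P \<and> s \<in> {0..1} \<and> t \<in> {0..1} \<and>
        g s \<in> \<phi> (P ! i) \<and> g t \<in> \<phi> (P ! j) \<longrightarrow> s \<le> t)"

definition shortest_curve_rel :: "'v set \<Rightarrow> ('v \<Rightarrow> point set) \<Rightarrow> 'v set \<Rightarrow> (real \<Rightarrow> point) \<Rightarrow> bool" where
  "shortest_curve_rel V \<phi> D g \<longleftrightarrow> (\<exists>P. shortest_curve_of V \<phi> D P g)"

end

theory Submission
  imports Defs
begin

lemma walk_in_succ: "walk_in S E P \<longleftrightarrow> P \<noteq> [] \<and> set P \<subseteq> S \<and> successively E P"
  by (simp add: walk_in_def successively_conv_nth)

lemma succ_take: "successively E xs \<Longrightarrow> successively E (take k xs)"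
  by (simp add: successively_conv_nth)

lemma succ_drop: "successively E xs \<Longrightarrow> successively E (drop k xs)"
  by (auto simp: successively_conv_nth)

lemma param_in: "0 \<le> a \<Longrightarrow> a \<le> b \<Longrightarrow> s \<in> {0..1::real} \<Longrightarrow> (b - a) * s + a \<in> {a..b}"
proof -
  assume h: "0 \<le> a" "a \<le> b" "s \<in> {0..1::real}"
  have "(b - a) * s \<le> (b - a) * 1" using h by (intro mult_left_mono) auto
  moreover have "0 \<le> (b - a) * s" using h by auto
  ultimately show ?thesis by auto
qed

lemma restr_adj:
  assumes "x \<in> restr_V V \<phi> R" "y \<in> restr_V V \<phi> R" "adj restr_rep x y"
  shows "adj \<phi> (fst x) (fst y)"
proof -
  obtain v p where x: "x = (v, path_component_set (\<phi> v \<inter> R) p)" using assms(1) by (auto simp: restr_V_def)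
  obtain w q where y: "y = (w, path_component_set (\<phi> w \<inter> R) q)" using assms(2) by (auto simp: restr_V_def)
  obtain z where z: "z \<in> snd x" "z \<in> snd y" using assms(3) by (auto simp: adj_def restr_rep_def)
  have "v \<noteq> w"
  proof
    assume "v = w"
    then have "snd x = snd y" using z x y by (metis path_component_eq snd_conv)
    then show False using assms(3) x y \<open>v = w\<close> by (auto simp: adj_def restr_rep_def)
  qed
  moreover have "z \<in> \<phi> v" "z \<in> \<phi> w" using z x y path_component_subset by fastforce+
  ultimately show ?thesis using x y by (auto simp: adj_def)
qed

theorem lemma10:
  fixes V :: "'v set" and \<phi> :: "'v \<Rightarrow> point set" and D :: "'v set"
    and R :: "point set" and g :: "real \<Rightarrow> point" and a b :: real
  assumes "string_rep V \<phi>"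
    and "D \<subseteq> V"
    and "region V \<phi> R"
    and "shortest_curve_rel V \<phi> D g"
    and "0 \<le> a" and "a \<le> b" and "b \<le> 1"
    and "path_image (subpath a b g) \<subseteq> R"
  shows "shortest_curve_rel (restr_V V \<phi> R) restr_rep (restr_D V \<phi> R D) (subpath a b g)"
proof -
  obtain P where P: "shortest_curve_of V \<phi> D P g" using assms(4) unfolding shortest_curve_rel_def by auto
  define n where "n = length P"
  have Pd: "shortest_path_rel V \<phi> D P \<and> path g \<and>
     pathstart g \<in> \<phi> (hd P) \<and> pathfinish g \<in> \<phi> (last P) \<and>
     path_image g \<subseteq> \<Union>(\<phi> ` set P) \<and>
     (\<forall>p\<in>set P. path_image g \<inter> \<phi> p \<noteq> {} \<and> connected (path_image g \<inter> \<phi> p)) \<and>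
     (\<forall>i j s t. i < j \<and> j < length P \<and> s \<in> {0..1} \<and> t \<in> {0..1} \<and>
        g s \<in> \<phi> (P ! i) \<and> g t \<in> \<phi> (P ! j) \<longrightarrow> s \<le> t)"
    using P unfolding shortest_curve_of_def .
  have sp: "shortest_path_rel V \<phi> D P" using Pd by (rule conjunct1)
  have pg: "path g" using Pd by (elim conjE)
  have img: "path_image g \<subseteq> \<Union>(\<phi> ` set P)" using Pd by (elim conjE)
  have meet: "\<forall>p\<in>set P. path_image g \<inter> \<phi> p \<noteq> {} \<and> connected (path_image g \<inter> \<phi> p)"
    using Pd by (elim conjE)
  have ord: "\<And>i j s t. i < j \<Longrightarrow> j < n \<Longrightarrow> s \<in> {0..1} \<Longrightarrow> t \<in> {0..1} \<Longrightarrow> g s \<in> \<phi> (P!i) \<Longrightarrow> g t \<in> \<phi> (P!j) \<Longrightarrow> s \<le> t"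
  proof -
    fix i j s t assume h: "i < j" "j < n" "s \<in> {0..1}" "t \<in> {0..1}" "g s \<in> \<phi> (P!i)" "g t \<in> \<phi> (P!j)"
    have o: "\<forall>i j s t. i < j \<and> j < length P \<and> s \<in> {0..1} \<and> t \<in> {0..1} \<and>
        g s \<in> \<phi> (P ! i) \<and> g t \<in> \<phi> (P ! j) \<longrightarrow> s \<le> t" using Pd by (elim conjE)
    show "s \<le> t" using o[rule_format, of i j s t] h unfolding n_def by blast
  qed
  have walkP: "walk_in V (adj \<phi>) P" using sp unfolding shortest_path_rel_def by (rule conjunct1)
  have shortP: "\<And>Q. walk_in (set P \<union> (D \<inter> V)) (adj \<phi>) Q \<Longrightarrow> hd Q = hd P \<Longrightarrow> last Q = last P \<Longrightarrow> n \<le> length Q"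
    using sp unfolding shortest_path_rel_def n_def by blast
  have Pne: "P \<noteq> []" and PV: "set P \<subseteq> V" and Psucc: "successively (adj \<phi>) P"
    using walkP unfolding walk_in_succ by auto
  have Padj: "\<And>i. Suc i < n \<Longrightarrow> adj \<phi> (P!i) (P!Suc i)"
    using Psucc successively_nth n_def by blast
  have cover: "\<And>u. u \<in> {0..1} \<Longrightarrow> \<exists>j<n. g u \<in> \<phi> (P!j)"
  proof -
    fix u :: real assume "u \<in> {0..1}"
    then have "g u \<in> path_image g" by (simp add: path_image_def)
    then obtain p where "p \<in> set P" "g u \<in> \<phi> p" using img by auto
    then show "\<exists>j<n. g u \<in> \<phi> (P!j)" by (metis in_set_conv_nth n_def)
  qed
  have nonemp: "\<And>i. i < n \<Longrightarrow> \<exists>t\<in>{0..1}. g t \<in> \<phi> (P!i)"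
  proof -
    fix i assume "i<n"
    then have "P!i \<in> set P" by (simp add: n_def)
    then obtain x where "x \<in> path_image g" "x \<in> \<phi> (P!i)" using meet by blast
    then show "\<exists>t\<in>{0..1}. g t \<in> \<phi> (P!i)" by (auto simp: path_image_def)
  qed
  have ab01: "{a..b} \<subseteq> {0..1}" using assms by auto
  obtain k m where km: "k \<le> m" "m < n" "g a \<in> \<phi> (P!k)" "g b \<in> \<phi> (P!m)" "a = b \<Longrightarrow> k = m"
  proof -
    obtain k where k: "k<n" "g a \<in> \<phi>(P!k)" using cover[of a] assms by auto
    obtain m where m: "m<n" "g b \<in> \<phi>(P!m)" using cover[of b] assms by auto
    show ?thesis
    proof (cases "a = b")
      case True then show ?thesis using that[of k k] k by auto
    next
      case False
      have "k \<le> m"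
      proof (rule ccontr)
        assume "\<not> k \<le> m"
        then have "b \<le> a" using ord[of m k b a] k m assms by auto
        then show False using False assms by auto
      qed
      then show ?thesis using that[of k m] k m False by auto
    qed
  qed
  define S where "S i = {t \<in> {a..b}. g t \<in> \<phi> (P!i)}" for i
  have Sab: "\<And>i. S i \<subseteq> {a..b}" by (auto simp: S_def)
  have Sne: "\<And>i. k \<le> i \<Longrightarrow> i \<le> m \<Longrightarrow> S i \<noteq> {}"
  proof -
    fix i assume i: "k \<le> i" "i \<le> m"
    show "S i \<noteq> {}"
    proof (cases "i = k")
      case True then show ?thesis using km assms by (auto simp: S_def)
    next
      case False
      show ?thesis
      proof (cases "i = m")
        case True then show ?thesis using km assms by (auto simp: S_def)
      next
        case False2: False
        obtain t where t: "t \<in> {0..1}" "g t \<in> \<phi> (P!i)" using nonemp[of i] i km by auto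
        have "a \<le> t" using ord[of k i a t] i False t km assms by auto
        moreover have "t \<le> b" using ord[of i m t b] i False2 t km assms by auto
        ultimately show ?thesis using t by (auto simp: S_def)
      qed
    qed
  qed
  have Sint: "\<And>i. i < n \<Longrightarrow> is_interval (S i)"
  proof -
    fix i assume i: "i<n"
    have "\<forall>s\<in>S i. \<forall>t\<in>S i. \<forall>u. s \<le> u \<and> u \<le> t \<longrightarrow> u \<in> S i"
    proof (intro ballI allI impI)
      fix s t u assume s: "s \<in> S i" and t: "t \<in> S i" and u: "s \<le> u \<and> u \<le> t"
      have uab: "u \<in> {a..b}" using s t u by (auto simp: S_def)
      then have u01: "u \<in> {0..1}" using ab01 by auto
      have s01: "s \<in> {0..1}" and t01: "t \<in> {0..1}" using s t ab01 Sab by blast+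
      obtain j where j: "j<n" "g u \<in> \<phi>(P!j)" using cover u01 by blast
      have "g u \<in> \<phi> (P!i)"
      proof (cases j i rule: linorder_cases)
        case less
        have gs: "g s \<in> \<phi> (P!i)" using s by (simp add: S_def)
        have "u \<le> s" by (rule ord[OF less i u01 s01 j(2) gs])
        then have "u = s" using u by auto
        then show ?thesis using gs by simp
      next
        case equal then show ?thesis using j by simp
      next
        case greater
        have gt: "g t \<in> \<phi> (P!i)" using t by (simp add: S_def)
        have "t \<le> u" by (rule ord[OF greater j(1) t01 u01 gt j(2)])
        then have "u = t" using u by auto
        then show ?thesis using gt by simp
      qed
      then show "u \<in> S i" using uab by (simp add: S_def)
    qed
    then show "is_interval (S i)" unfolding is_interval_1 by blast
  qed
  have contg: "continuous_on {0..1} g" using pg unfolding path_def .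
  have contab: "continuous_on {a..b} g" using continuous_on_subset[OF contg ab01] .
  define c where "c i = (SOME t. t \<in> S i)" for i
  have cS: "\<And>i. k \<le> i \<Longrightarrow> i \<le> m \<Longrightarrow> c i \<in> S i" using Sne unfolding c_def by (metis some_in_eq)
  define C where "C i = path_component_set (\<phi> (P!i) \<inter> R) (g (c i))" for i
  have gabR: "g ` {a..b} \<subseteq> R" using assms(8) assms(6) by (simp add: path_image_subpath)
  have pcS: "\<And>i. i < n \<Longrightarrow> path_connected (g ` S i)"
    by (rule path_connected_continuous_image[OF continuous_on_subset[OF contab Sab]])
       (simp add: Sint is_interval_path_connected)
  have SC: "\<And>i. k \<le> i \<Longrightarrow> i \<le> m \<Longrightarrow> g ` S i \<subseteq> C i"
  proof -
    fix i assume i: "k \<le> i" "i \<le> m"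
    show "g ` S i \<subseteq> C i" unfolding C_def
    proof (rule path_component_maximal)
      show "g (c i) \<in> g ` S i" using cS i by auto
      show "path_connected (g ` S i)" using pcS i km by auto
      show "g ` S i \<subseteq> \<phi> (P ! i) \<inter> R" using gabR Sab by (auto simp: S_def)
    qed
  qed
  have Cphi: "\<And>i. C i \<subseteq> \<phi> (P!i)" unfolding C_def using path_component_subset by blast
  have CSeq: "\<And>i. k \<le> i \<Longrightarrow> i \<le> m \<Longrightarrow> g ` {a..b} \<inter> C i = g ` S i"
  proof -
    fix i assume i: "k \<le> i" "i \<le> m"
    show "g ` {a..b} \<inter> C i = g ` S i"
    proof
      show "g ` {a..b} \<inter> C i \<subseteq> g ` S i" using Cphi[of i] by (auto simp: S_def)
      show "g ` S i \<subseteq> g ` {a..b} \<inter> C i" using SC[OF i] Sab by auto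
    qed
  qed
  have closedphi: "\<And>j. j<n \<Longrightarrow> closed (\<phi> (P!j))"
  proof -
    fix j assume "j<n"
    then have "P!j \<in> V" using PV n_def nth_mem by auto
    moreover have "\<forall>v\<in>V. \<exists>g. arc g \<and> \<phi> v = path_image g"
      using assms(1) unfolding string_rep_def by (elim conjE) assumption
    ultimately obtain h where "arc h" "\<phi> (P!j) = path_image h" by blast
    then show "closed (\<phi> (P!j))" by (simp add: arc_imp_path compact_imp_closed compact_path_image)
  qed
  have glue: "\<And>i. k \<le> i \<Longrightarrow> i < m \<Longrightarrow> \<exists>u\<in>{a..b}. g u \<in> \<phi>(P!i) \<and> g u \<in> \<phi>(P!Suc i)"
  proof -
    fix i assume i: "k \<le> i" "i < m"
    define A where "A = {a..b} \<inter> g -` (\<Union>j\<in>{..i}. \<phi> (P!j))"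
    define B where "B = {a..b} \<inter> g -` (\<Union>j\<in>{Suc i..<n}. \<phi> (P!j))"
    have cA: "closed A" unfolding A_def
      apply (rule continuous_closed_preimage[OF contab closed_atLeastAtMost])
      apply (rule closed_UN) using closedphi i km by auto
    have cB: "closed B" unfolding B_def
      apply (rule continuous_closed_preimage[OF contab closed_atLeastAtMost])
      apply (rule closed_UN) using closedphi i km by auto
    have "connected {a..b}" by simp
    moreover have "{a..b} \<subseteq> A \<union> B"
    proof
      fix u assume u: "u \<in> {a..b}"
      obtain j where "j<n" "g u \<in> \<phi>(P!j)" using cover ab01 u by blast
      then show "u \<in> A \<union> B" using u by (cases "j \<le> i") (auto simp: A_def B_def)
    qed
    moreover have "A \<inter> {a..b} \<noteq> {}"
    proof -
      have "g a \<in> (\<Union>j\<in>{..i}. \<phi> (P!j))" using km(3) i by blast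
      then have "a \<in> A" using assms(6) by (simp add: A_def)
      then show ?thesis using assms(6) by auto
    qed
    moreover have "B \<inter> {a..b} \<noteq> {}"
    proof -
      have "g b \<in> (\<Union>j\<in>{Suc i..<n}. \<phi> (P!j))" using km(2,4) i by (intro UN_I[of m]) auto
      then have "b \<in> B" using assms(6) by (simp add: B_def)
      then show ?thesis using assms(6) by auto
    qed
    ultimately have "A \<inter> B \<inter> {a..b} \<noteq> {}" using cA cB unfolding connected_closed by blast
    then obtain u where uA: "u \<in> A" and uB: "u \<in> B" by blast
    from uA obtain j where j1: "j \<le> i" "g u \<in> \<phi>(P!j)" and uab: "u \<in> {a..b}" unfolding A_def by blast
    from uB obtain j' where j2: "Suc i \<le> j'" "j' < n" "g u \<in> \<phi>(P!j')" unfolding B_def by auto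
    note u = uab j1 j2
    obtain ti where ti: "ti \<in> S i" using Sne i by fastforce
    obtain ti' where ti': "ti' \<in> S (Suc i)" using Sne i by fastforce
    have u01: "u \<in> {0..1}" using u ab01 by auto
    have ti01: "ti \<in> {0..1}" "ti' \<in> {0..1}" using ti ti' Sab ab01 by blast+
    have "g u \<in> \<phi> (P!i)"
    proof (cases "j = i")
      case True then show ?thesis using u by simp
    next
      case False
      have "u \<le> ti" using ord[of j i u ti] False u ti ti01 u01 km i by (auto simp: S_def)
      moreover have "ti \<le> u" using ord[of i j' ti u] u ti ti01 u01 km i by (auto simp: S_def)
      ultimately have "u = ti" by simp
      then show ?thesis using ti by (simp add: S_def)
    qed
    moreover have "g u \<in> \<phi> (P!Suc i)"
    proof (cases "j' = Suc i")
      case True then show ?thesis using u by simp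
    next
      case False
      have "u \<le> ti'" using ord[of j "Suc i" u ti'] False u ti' ti01 u01 km i by (auto simp: S_def)
      moreover have "ti' \<le> u" using ord[of "Suc i" j' ti' u] False u ti' ti01 u01 km i by (auto simp: S_def)
      ultimately have "u = ti'" by simp
      then show ?thesis using ti' by (simp add: S_def)
    qed
    ultimately show "\<exists>u\<in>{a..b}. g u \<in> \<phi>(P!i) \<and> g u \<in> \<phi>(P!Suc i)" using u by blast
  qed
  have cover2: "\<And>u. u \<in> {a..b} \<Longrightarrow> \<exists>j. k \<le> j \<and> j \<le> m \<and> g u \<in> \<phi>(P!j)"
  proof -
    fix u assume u: "u \<in> {a..b}"
    obtain j where j: "j<n" "g u \<in> \<phi>(P!j)" using cover ab01 u by blast
    show "\<exists>j. k \<le> j \<and> j \<le> m \<and> g u \<in> \<phi>(P!j)"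
    proof (cases "j < k")
      case True
      then have "u \<le> a" using ord[of j k u a] j km u ab01 assms by auto
      then have "u = a" using u by auto
      then show ?thesis using km by auto
    next
      case False
      show ?thesis
      proof (cases "m < j")
        case True
        then have "b \<le> u" using ord[of m j b u] j km u ab01 assms by auto
        then have "u = b" using u by auto
        then show ?thesis using km by auto
      next
        case False2: False
        show ?thesis using False False2 j by (intro exI[of _ j]) auto
      qed
    qed
  qed
  define Vr where "Vr = restr_V V \<phi> R"
  define Dr where "Dr = restr_D V \<phi> R D"
  define P' where "P' = map (\<lambda>i. (P!i, C i)) [k..<Suc m]"
  have lenP': "length P' = Suc m - k" using km by (simp add: P'_def)
  have P'nth: "\<And>j. j < length P' \<Longrightarrow> P'!j = (P!(k+j), C(k+j))" unfolding P'_def by (simp del: upt_Suc)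
  have setP': "set P' = (\<lambda>i. (P!i, C i)) ` {k..m}" by (auto simp: P'_def)
  have P'ne: "P' \<noteq> []" using km by (simp add: P'_def)
  have inVr: "\<And>i. k \<le> i \<Longrightarrow> i \<le> m \<Longrightarrow> (P!i, C i) \<in> Vr"
  proof -
    fix i assume i: "k \<le> i" "i \<le> m"
    have "P!i \<in> V" using PV i km n_def by auto
    moreover have "g (c i) \<in> \<phi> (P!i) \<inter> R" using cS[OF i] gabR Sab by (auto simp: S_def)
    ultimately show "(P!i, C i) \<in> Vr" unfolding Vr_def restr_V_def C_def by blast
  qed
  have P'Vr: "set P' \<subseteq> Vr" using setP' inVr by auto
  have hdP': "hd P' = (P!k, C k)" using P'nth[of 0] P'ne by (simp add: hd_conv_nth)
  have lastP': "last P' = (P!m, C m)" using P'nth[of "length P' - 1"] P'ne lenP' km by (simp add: last_conv_nth)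
  have P'succ: "successively (adj restr_rep) P'"
    unfolding successively_conv_nth
  proof (intro allI impI)
    fix j assume j: "Suc j < length P'"
    have i: "k \<le> k + j" "k + j < m" using j lenP' by auto
    obtain u where u: "u\<in>{a..b}" "g u \<in> \<phi>(P!(k+j))" "g u \<in> \<phi>(P!Suc (k+j))" using glue[OF i] by blast
    have "g u \<in> C (k+j)" using SC[of "k+j"] u i by (auto simp: S_def)
    moreover have "g u \<in> C (Suc (k+j))" using SC[of "Suc (k+j)"] u i by (auto simp: S_def)
    moreover have "P!(k+j) \<noteq> P!Suc (k+j)" using Padj[of "k+j"] i km by (auto simp: adj_def)
    ultimately show "adj restr_rep (P' ! j) (P' ! Suc j)"
      using P'nth[of j] P'nth[of "Suc j"] j by (auto simp: adj_def restr_rep_def)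
  qed
  have sp': "shortest_path_rel Vr restr_rep Dr P'"
    unfolding shortest_path_rel_def
  proof (intro conjI allI impI)
    show "walk_in Vr (adj restr_rep) P'" using P'ne P'Vr P'succ by (simp add: walk_in_succ)
    fix Q assume Q: "walk_in (set P' \<union> (Dr \<inter> Vr)) (adj restr_rep) Q \<and> hd Q = hd P' \<and> last Q = last P'"
    have Qne: "Q \<noteq> []" and QVr: "set Q \<subseteq> Vr" and Qs: "successively (adj restr_rep) Q"
      using Q P'Vr unfolding walk_in_succ by auto
    define Q0 where "Q0 = map fst Q"
    have Q0s: "successively (adj \<phi>) Q0"
      unfolding successively_conv_nth Q0_def
    proof (intro allI impI)
      fix i assume i: "Suc i < length (map fst Q)"
      then have "Q!i \<in> Vr" "Q!Suc i \<in> Vr" using QVr by auto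
      moreover have "adj restr_rep (Q!i) (Q!Suc i)" using Qs i successively_nth by fastforce
      ultimately show "adj \<phi> (map fst Q ! i) (map fst Q ! Suc i)"
        using restr_adj i unfolding Vr_def by fastforce
    qed
    have Q0set: "set Q0 \<subseteq> set P \<union> (D \<inter> V)"
    proof
      fix x assume "x \<in> set Q0"
      then obtain y where y: "y \<in> set Q" "x = fst y" by (auto simp: Q0_def)
      then have "y \<in> set P' \<or> y \<in> Dr" using Q unfolding walk_in_def by auto
      then show "x \<in> set P \<union> (D \<inter> V)"
      proof
        assume "y \<in> set P'"
        then show ?thesis using y setP' km n_def by auto
      next
        assume "y \<in> Dr"
        then show ?thesis using y assms(2) by (auto simp: Dr_def restr_D_def)
      qed
    qed
    have hdQ0: "hd Q0 = P!k" using Q hdP' Qne by (simp add: Q0_def hd_map)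
    have lastQ0: "last Q0 = P!m" using Q lastP' Qne by (simp add: Q0_def last_map)
    have Q0ne: "Q0 \<noteq> []" using Qne by (simp add: Q0_def)
    define W where "W = take k P @ Q0 @ drop (Suc m) P"
    have Ws1: "successively (adj \<phi>) (Q0 @ drop (Suc m) P)"
    proof -
      have "drop (Suc m) P \<noteq> [] \<Longrightarrow> adj \<phi> (last Q0) (hd (drop (Suc m) P))"
        using lastQ0 Padj[of m] by (simp add: hd_drop_conv_nth n_def)
      then show ?thesis using Q0s succ_drop[OF Psucc] by (auto simp: successively_append_iff)
    qed
    have Ws: "successively (adj \<phi>) W"
    proof -
      have "take k P \<noteq> [] \<Longrightarrow> adj \<phi> (last (take k P)) (hd (Q0 @ drop (Suc m) P))"
      proof -
        assume "take k P \<noteq> []"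
        then have k0: "0 < k" by auto
        have "last (take k P) = P!(k - 1)" using k0 km n_def
          by (subst last_conv_nth) (auto simp: min_def)
        moreover have "hd (Q0 @ drop (Suc m) P) = P!Suc (k-1)" using hdQ0 Q0ne k0 by simp
        ultimately show ?thesis using Padj[of "k-1"] k0 km by simp
      qed
      then show ?thesis using Ws1 succ_take[OF Psucc] unfolding W_def
        by (auto simp: successively_append_iff)
    qed
    have Wset: "set W \<subseteq> set P \<union> (D \<inter> V)" using Q0set unfolding W_def
      by (auto dest: in_set_takeD in_set_dropD)
    have hdW: "hd W = hd P"
    proof (cases k)
      case 0 then show ?thesis using hdQ0 Q0ne Pne by (simp add: W_def hd_conv_nth[of P, symmetric])
    next
      case (Suc k') then show ?thesis using Pne by (simp add: W_def)
    qed
    have lastW: "last W = last P"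
    proof (cases "Suc m = n")
      case True
      then have "drop (Suc m) P = []" by (simp add: n_def)
      then have "last W = last Q0" using Q0ne by (simp add: W_def)
      then show ?thesis using lastQ0 True Pne last_conv_nth[of P] by (metis diff_Suc_1 n_def)
    next
      case False
      then have "drop (Suc m) P \<noteq> []" using km n_def by simp
      then show ?thesis by (simp add: W_def)
    qed
    have Wne: "W \<noteq> []" using Q0ne by (simp add: W_def)
    have "walk_in (set P \<union> (D \<inter> V)) (adj \<phi>) W" using Wne Wset Ws by (simp add: walk_in_succ)
    then have "n \<le> length W" using shortP[of W] hdW lastW by blast
    moreover have "length W = k + length Q + (n - Suc m)" using km by (simp add: W_def Q0_def n_def)
    ultimately show "length P' \<le> length Q" using lenP' km by simp
  qed
  have pimg: "path_image (subpath a b g) = g ` {a..b}" using assms(6) by (simp add: path_image_subpath)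
  have "shortest_curve_of Vr restr_rep Dr P' (subpath a b g)"
    unfolding shortest_curve_of_def
  proof (intro conjI)
    show "shortest_path_rel Vr restr_rep Dr P'" by (rule sp')
    show "path (subpath a b g)" using pg assms(5,6,7) by (intro path_subpath) auto
    show "pathstart (subpath a b g) \<in> restr_rep (hd P')"
    proof -
      have "a \<in> S k" using km(3) assms(6) by (simp add: S_def)
      then have "g a \<in> C k" using SC[of k] km(1) by blast
      then show ?thesis using hdP' by (simp add: restr_rep_def pathstart_subpath)
    qed
    show "pathfinish (subpath a b g) \<in> restr_rep (last P')"
    proof -
      have "b \<in> S m" using km(4) assms(6) by (simp add: S_def)
      then have "g b \<in> C m" using SC[of m] km(1) by blast
      then show ?thesis using lastP' by (simp add: restr_rep_def pathfinish_subpath)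
    qed
    show "path_image (subpath a b g) \<subseteq> \<Union> (restr_rep ` set P')"
    proof
      fix x assume "x \<in> path_image (subpath a b g)"
      then obtain u where u: "u \<in> {a..b}" "x = g u" using pimg by auto
      obtain j where j: "k \<le> j" "j \<le> m" "g u \<in> \<phi>(P!j)" using cover2[OF u(1)] by blast
      have "x \<in> C j" using SC[OF j(1,2)] u j by (auto simp: S_def)
      then show "x \<in> \<Union> (restr_rep ` set P')" using setP' j by (auto simp: restr_rep_def)
    qed
    show "\<forall>p\<in>set P'. path_image (subpath a b g) \<inter> restr_rep p \<noteq> {} \<and>
        connected (path_image (subpath a b g) \<inter> restr_rep p)"
    proof
      fix p assume "p \<in> set P'"
      then obtain i where i: "k \<le> i" "i \<le> m" "p = (P!i, C i)" using setP' by auto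
      have eq: "path_image (subpath a b g) \<inter> restr_rep p = g ` S i"
        using CSeq[OF i(1,2)] pimg i by (simp add: restr_rep_def)
      show "path_image (subpath a b g) \<inter> restr_rep p \<noteq> {} \<and>
        connected (path_image (subpath a b g) \<inter> restr_rep p)"
        unfolding eq using Sne[OF i(1,2)] pcS[of i] i km path_connected_imp_connected by auto
    qed
    show "\<forall>i j s t. i < j \<and> j < length P' \<and> s \<in> {0..1} \<and> t \<in> {0..1} \<and>
        subpath a b g s \<in> restr_rep (P' ! i) \<and> subpath a b g t \<in> restr_rep (P' ! j) \<longrightarrow> s \<le> t"
    proof (intro allI impI)
      fix i j s t assume h: "i < j \<and> j < length P' \<and> s \<in> {0..1} \<and> t \<in> {0..1} \<and>
        subpath a b g s \<in> restr_rep (P' ! i) \<and> subpath a b g t \<in> restr_rep (P' ! j)"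
      have ij: "i < j" and jl: "j < length P'" and s01: "s \<in> {0..1}" and t01: "t \<in> {0..1}"
        and hs: "subpath a b g s \<in> restr_rep (P' ! i)" and ht: "subpath a b g t \<in> restr_rep (P' ! j)"
        using h by blast+
      have km': "k < m" using ij jl lenP' by linarith
      then have ab: "a < b" using km(5) assms(6) by force
      have il: "i < length P'" using ij jl by linarith
      have "subpath a b g s \<in> C (k+i)" using hs P'nth[OF il] by (simp add: restr_rep_def)
      then have gs: "g ((b - a) * s + a) \<in> \<phi> (P!(k+i))" using Cphi[of "k+i"] by (auto simp: subpath_def)
      have "subpath a b g t \<in> C (k+j)" using ht P'nth[OF jl] by (simp add: restr_rep_def)
      then have gt: "g ((b - a) * t + a) \<in> \<phi> (P!(k+j))" using Cphi[of "k+j"] by (auto simp: subpath_def)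
      have p1: "(b - a) * s + a \<in> {0..1}" using param_in[OF assms(5,6) s01] ab01 by blast
      have p2: "(b - a) * t + a \<in> {0..1}" using param_in[OF assms(5,6) t01] ab01 by blast
      have kj: "k + i < k + j" using ij by simp
      have kjn: "k + j < n" using jl lenP' km by linarith
      have "(b - a) * s + a \<le> (b - a) * t + a" by (rule ord[OF kj kjn p1 p2 gs gt])
      then show "s \<le> t" using ab by simp
    qed
  qed
  then show ?thesis unfolding shortest_curve_rel_def Vr_def Dr_def by blast
qed

end
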